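(* In the differential algebra $\Gamma$, both the element $\hat{\mathcal D}=bc^{-1}-\alpha c^{-1}\delta c^{-1}$ and the superdeterminant $\mathcal D_h=ad^{-1}-\beta d^{-1}\gamma d^{-1}$ are central, i.e. commute with all of $a,\beta,\gamma,d,\alpha,b,c,\delta$.
   Context: Let $h$ be an odd (Grassmann) parameter with $h^2=0$; even elements commute with everything and odd elements anticommute with each other. $\mathcal A$ is the $\mathbb Z_2$-graded algebra generated by even invertible $a,d$ and odd $\beta,\gamma$ ($h$ commuting with $a,d$, anticommuting with $\beta,\gamma$) subject to $a\beta=\beta a$, $a\gamma=\gamma a+h a^2(1-\mathcal D_h^{-1})$, $d\beta=\beta d$, $d\gamma=\gamma d+h d^2(\mathcal D_h-1)$, $\beta^2=0$, $\gamma^2=h\gamma d(1-\mathcal D_h)$, $\beta\gamma=-\gamma\beta+h\beta d(1-\mathcal D_h)$, $ad=da+h\beta d(\mathcal D_h-1)$, with $\mathcal D_h=ad^{-1}-\beta d^{-1}\gamma d^{-1}$. The differential algebra $\Gamma$ is the $\mathbb Z_2$-graded algebra generated by $\mathcal A$ together with odd elements $\alpha=\mathsf da,\ \delta=\mathsf dd$ and even elements $b=\mathsf d\beta,\ c=\mathsf d\gamma$ ($c$ assumed invertible; $h$ anticommutes with $\alpha,\delta$), where $\mathsf d$ is an odd map with $\mathsf d^2=0$, graded Leibniz rule and $\mathsf dh=-h\mathsf d$, subject to the relations $a\alpha=\alpha a+h(\alpha\beta-ba)$, $ab=ba-hb\beta$, $ac=ca+h(\alpha a-c\beta+\delta a)$,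 $a\delta=\delta a+h(ba+\delta\beta)$; $\beta\alpha=-\alpha\beta+hb\beta$, $\beta b=b\beta$, $\beta c=c\beta+h(\alpha+\delta)\beta$, $\beta\delta=-\delta\beta-hb\beta$; $\gamma\alpha=-\alpha\gamma+h(\alpha a+\alpha d+b\gamma)$, $\gamma b=b\gamma+hb(a+d)$, $\gamma c=c\gamma+h(\alpha\gamma+ca+cd+\delta\gamma)$, $\gamma\delta=-\delta\gamma+h(\delta a+\delta d-b\gamma)$; $d\alpha=\alpha d-h(\alpha\beta+bd)$, $db=bd+hb\beta$, $dc=cd+h(\alpha d+c\beta+\delta d)$, $d\delta=\delta d+h(bd-\delta\beta)$; and $\alpha b=b\alpha+hb^2$, $\alpha c=c\alpha+h(cb+\delta\alpha)$, $\delta b=b\delta-hb^2$, $\delta c=c\delta-h(cb-\alpha\delta)$, $\alpha^2=h\alpha b$, $\alpha\delta=-\delta\alpha+h(\delta-\alpha)b$, $\delta^2=-h\delta b$, $bc=cb+h(\delta+\alpha)b$. *)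

theory Defs
  imports Main "HOL.Real_Vector_Spaces"
begin

definition sdet :: "'r::ring_1 \<Rightarrow> 'r \<Rightarrow> 'r \<Rightarrow> 'r \<Rightarrow> 'r" where
  "sdet a be ga di = a * di - be * di * ga * di"

definition sdet_hat :: "'r::ring_1 \<Rightarrow> 'r \<Rightarrow> 'r \<Rightarrow> 'r \<Rightarrow> 'r" where
  "sdet_hat b al de ci = b * ci - al * ci * de * ci"

text \<open>Defining relations of the differential algebra Gamma (including those of the algebra A),
  realised inside an arbitrary associative unital real algebra.  Variables:
  h (odd parameter), a, d (even), be = beta, ga = gamma (odd), al = alpha, de = delta (odd),
  b, c (even); ai, di, ci are the two-sided inverses of a, d, c and Dhi the inverse of D_h.\<close>
definition Gamma_rels ::
  "'r::real_algebra_1 \<Rightarrow> 'r \<Rightarrow> 'r \<Rightarrow> 'r \<Rightarrow> 'r \<Rightarrow> 'r \<Rightarrow> 'r \<Rightarrow> 'r \<Rightarrow> 'r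
   \<Rightarrow> 'r \<Rightarrow> 'r \<Rightarrow> 'r \<Rightarrow> 'r \<Rightarrow> bool" where
  "Gamma_rels h a d be ga al b c de ai di ci Dhi \<longleftrightarrow>
    (let Dh = sdet a be ga di in
    \<comment> \<open>inverses\<close>
    a * ai = 1 \<and> ai * a = 1 \<and> d * di = 1 \<and> di * d = 1 \<and> c * ci = 1 \<and> ci * c = 1 \<and>
    Dh * Dhi = 1 \<and> Dhi * Dh = 1 \<and>
    \<comment> \<open>Grassmann parameter h\<close>
    h * h = 0 \<and>
    h * a = a * h \<and> h * d = d * h \<and> h * b = b * h \<and> h * c = c * h \<and>
    h * be = - (be * h) \<and> h * ga = - (ga * h) \<and> h * al = - (al * h) \<and> h * de = - (de * h) \<and>
    \<comment> \<open>relations of A\<close>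
    a * be = be * a \<and>
    a * ga = ga * a + h * a * a * (1 - Dhi) \<and>
    d * be = be * d \<and>
    d * ga = ga * d + h * d * d * (Dh - 1) \<and>
    be * be = 0 \<and>
    ga * ga = h * ga * d * (1 - Dh) \<and>
    be * ga = - (ga * be) + h * be * d * (1 - Dh) \<and>
    a * d = d * a + h * be * d * (Dh - 1) \<and>
    \<comment> \<open>relations of Gamma: a with differentials\<close>
    a * al = al * a + h * (al * be - b * a) \<and>
    a * b = b * a - h * b * be \<and>
    a * c = c * a + h * (al * a - c * be + de * a) \<and>
    a * de = de * a + h * (b * a + de * be) \<and>
    \<comment> \<open>beta with differentials\<close>
    be * al = - (al * be) + h * b * be \<and>
    be * b = b * be \<and>
    be * c = c * be + h * (al + de) * be \<and>
    be * de = - (de * be) - h * b * be \<and>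
    \<comment> \<open>gamma with differentials\<close>
    ga * al = - (al * ga) + h * (al * a + al * d + b * ga) \<and>
    ga * b = b * ga + h * b * (a + d) \<and>
    ga * c = c * ga + h * (al * ga + c * a + c * d + de * ga) \<and>
    ga * de = - (de * ga) + h * (de * a + de * d - b * ga) \<and>
    \<comment> \<open>d with differentials\<close>
    d * al = al * d - h * (al * be + b * d) \<and>
    d * b = b * d + h * b * be \<and>
    d * c = c * d + h * (al * d + c * be + de * d) \<and>
    d * de = de * d + h * (b * d - de * be) \<and>
    \<comment> \<open>differentials among themselves\<close>
    al * b = b * al + h * b * b \<and>
    al * c = c * al + h * (c * b + de * al) \<and>
    de * b = b * de - h * b * b \<and>
    de * c = c * de - h * (c * b - al * de) \<and>
    al * al = h * al * b \<and>
    al * de = - (de * al) + h * (de - al) * b \<and>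
    de * de = - (h * de * b) \<and>
    b * c = c * b + h * (de + al) * b)"

end

theory Submission
  imports Defs
begin

lemma conjL: "(x::'r::ring_1) * xi = 1 \<Longrightarrow> xi * y = xi * (y * x) * xi"
  by (simp add: mult.assoc)
lemma conjR: "(xi::'r::ring_1) * x = 1 \<Longrightarrow> y * xi = xi * (x * y) * xi"
  by (simp add: mult.assoc[symmetric])

locale GR =
  fixes h a d be ga al b c de ai di ci Dhi :: "'r::real_algebra_1"
  assumes G: "Gamma_rels h a d be ga al b c de ai di ci Dhi"
begin

lemma Rs:
  "a * ai = 1"
  "ai * a = 1"
  "d * di = 1"
  "di * d = 1"
  "c * ci = 1"
  "ci * c = 1"
  "(sdet a be ga di) * Dhi = 1"
  "Dhi * (sdet a be ga di) = 1"
  "h * h = 0"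
  "h * a = a * h"
  "h * d = d * h"
  "h * b = b * h"
  "h * c = c * h"
  "h * be = - (be * h)"
  "h * ga = - (ga * h)"
  "h * al = - (al * h)"
  "h * de = - (de * h)"
  "a * be = be * a"
  "a * ga = ga * a + h * a * a * (1 - Dhi)"
  "d * be = be * d"
  "d * ga = ga * d + h * d * d * ((sdet a be ga di) - 1)"
  "be * be = 0"
  "ga * ga = h * ga * d * (1 - (sdet a be ga di))"
  "be * ga = - (ga * be) + h * be * d * (1 - (sdet a be ga di))"
  "a * d = d * a + h * be * d * ((sdet a be ga di) - 1)"
  "a * al = al * a + h * (al * be - b * a)"
  "a * b = b * a - h * b * be"
  "a * c = c * a + h * (al * a - c * be + de * a)"
  "a * de = de * a + h * (b * a + de * be)"
  "be * al = - (al * be) + h * b * be"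
  "be * b = b * be"
  "be * c = c * be + h * (al + de) * be"
  "be * de = - (de * be) - h * b * be"
  "ga * al = - (al * ga) + h * (al * a + al * d + b * ga)"
  "ga * b = b * ga + h * b * (a + d)"
  "ga * c = c * ga + h * (al * ga + c * a + c * d + de * ga)"
  "ga * de = - (de * ga) + h * (de * a + de * d - b * ga)"
  "d * al = al * d - h * (al * be + b * d)"
  "d * b = b * d + h * b * be"
  "d * c = c * d + h * (al * d + c * be + de * d)"
  "d * de = de * d + h * (b * d - de * be)"
  "al * b = b * al + h * b * b"
  "al * c = c * al + h * (c * b + de * al)"
  "de * b = b * de - h * b * b"
  "de * c = c * de - h * (c * b - al * de)"
  "al * al = h * al * b"
  "al * de = - (de * al) + h * (de - al) * b"
  "de * de = - (h * de * b)"
  "b * c = c * b + h * (de + al) * b"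
  using G unfolding Gamma_rels_def Let_def by auto

lemmas R0 = Rs(1)
lemmas R1 = Rs(2)
lemmas R2 = Rs(3)
lemmas R3 = Rs(4)
lemmas R4 = Rs(5)
lemmas R5 = Rs(6)
lemmas R6 = Rs(7)
lemmas R7 = Rs(8)
lemmas R8 = Rs(9)
lemmas R9 = Rs(10)
lemmas R10 = Rs(11)
lemmas R11 = Rs(12)
lemmas R12 = Rs(13)
lemmas R13 = Rs(14)
lemmas R14 = Rs(15)
lemmas R15 = Rs(16)
lemmas R16 = Rs(17)
lemmas R17 = Rs(18)
lemmas R18 = Rs(19)
lemmas R19 = Rs(20)
lemmas R20 = Rs(21)
lemmas R21 = Rs(22)
lemmas R22 = Rs(23)
lemmas R23 = Rs(24)
lemmas R24 = Rs(25)
lemmas R25 = Rs(26)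
lemmas R26 = Rs(27)
lemmas R27 = Rs(28)
lemmas R28 = Rs(29)
lemmas R29 = Rs(30)
lemmas R30 = Rs(31)
lemmas R31 = Rs(32)
lemmas R32 = Rs(33)
lemmas R33 = Rs(34)
lemmas R34 = Rs(35)
lemmas R35 = Rs(36)
lemmas R36 = Rs(37)
lemmas R37 = Rs(38)
lemmas R38 = Rs(39)
lemmas R39 = Rs(40)
lemmas R40 = Rs(41)
lemmas R41 = Rs(42)
lemmas R42 = Rs(43)
lemmas R43 = Rs(44)
lemmas R44 = Rs(45)
lemmas R45 = Rs(46)
lemmas R46 = Rs(47)
lemmas R47 = Rs(48)
lemmas R48 = Rs(49)
lemma I_a_ai: "a * ai = 1" "a * (ai * z) = z" using R0 by (simp_all add: mult.assoc[symmetric])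
lemma I_ai_a: "ai * a = 1" "ai * (a * z) = z" using R1 by (simp_all add: mult.assoc[symmetric])
lemma I_d_di: "d * di = 1" "d * (di * z) = z" using R2 by (simp_all add: mult.assoc[symmetric])
lemma I_di_d: "di * d = 1" "di * (d * z) = z" using R3 by (simp_all add: mult.assoc[symmetric])
lemma I_c_ci: "c * ci = 1" "c * (ci * z) = z" using R4 by (simp_all add: mult.assoc[symmetric])
lemma I_ci_c: "ci * c = 1" "ci * (c * z) = z" using R5 by (simp_all add: mult.assoc[symmetric])
lemma H_h: "h * h = 0" "h * (h * z) = 0" using R8 by (simp_all add: mult.assoc[symmetric])
lemma H_a: "a * h = h * a" "a * (h * z) = h * (a * z)" using R9 by (simp_all add: mult.assoc[symmetric])
lemma H_d: "d * h = h * d" "d * (h * z) = h * (d * z)" using R10 by (simp_all add: mult.assoc[symmetric])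
lemma H_b: "b * h = h * b" "b * (h * z) = h * (b * z)" using R11 by (simp_all add: mult.assoc[symmetric])
lemma H_c: "c * h = h * c" "c * (h * z) = h * (c * z)" using R12 by (simp_all add: mult.assoc[symmetric])
lemma H_be: "be * h = - (h * be)" "be * (h * z) = - (h * (be * z))" using R13 by (simp_all add: mult.assoc[symmetric])
lemma H_ga: "ga * h = - (h * ga)" "ga * (h * z) = - (h * (ga * z))" using R14 by (simp_all add: mult.assoc[symmetric])
lemma H_al: "al * h = - (h * al)" "al * (h * z) = - (h * (al * z))" using R15 by (simp_all add: mult.assoc[symmetric])
lemma H_de: "de * h = - (h * de)" "de * (h * z) = - (h * (de * z))" using R16 by (simp_all add: mult.assoc[symmetric])
lemma H_ai: "ai * h = h * ai" "ai * (h * z) = h * (ai * z)"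
proof -
  have "ai * h = ai * (h * a) * ai" by (simp add: mult.assoc I_a_ai)
  also have "\<dots> = h * ai" by (simp add: R9 mult.assoc I_ai_a I_a_ai)
  finally show "ai * h = h * ai" .
  then show "ai * (h * z) = h * (ai * z)" by (metis mult.assoc)
qed
lemma H_di: "di * h = h * di" "di * (h * z) = h * (di * z)"
proof -
  have "di * h = di * (h * d) * di" by (simp add: mult.assoc I_d_di)
  also have "\<dots> = h * di" by (simp add: R10 mult.assoc I_di_d I_d_di)
  finally show "di * h = h * di" .
  then show "di * (h * z) = h * (di * z)" by (metis mult.assoc)
qed
lemma H_ci: "ci * h = h * ci" "ci * (h * z) = h * (ci * z)"
proof -
  have "ci * h = ci * (h * c) * ci" by (simp add: mult.assoc I_c_ci)
  also have "\<dots> = h * ci" by (simp add: R12 mult.assoc I_ci_c I_c_ci)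
  finally show "ci * h = h * ci" .
  then show "ci * (h * z) = h * (ci * z)" by (metis mult.assoc)
qed
lemma Dh_h: "sdet a be ga di * h = h * sdet a be ga di" by (simp add: sdet_def algebra_simps I_a_ai I_ai_a I_d_di I_di_d I_c_ci I_ci_c H_h H_a H_d H_b H_c H_be H_ga H_al H_de H_ai H_di H_ci)
lemma H_Dhi: "Dhi * h = h * Dhi" "Dhi * (h * z) = h * (Dhi * z)"
proof -
  have "Dhi * h = Dhi * (h * sdet a be ga di) * Dhi" using R6 by (simp add: mult.assoc)
  also have "\<dots> = Dhi * (sdet a be ga di * h) * Dhi" by (simp only: Dh_h)
  also have "\<dots> = h * Dhi" using R7 by (simp add: mult.assoc[symmetric])
  finally show "Dhi * h = h * Dhi" .
  then show "Dhi * (h * z) = h * (Dhi * z)" by (metis mult.assoc)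
qed
lemmas HS = I_a_ai I_ai_a I_d_di I_di_d I_c_ci I_ci_c H_h H_a H_d H_b H_c H_be H_ga H_al H_de H_ai H_di H_ci H_Dhi
lemma L_a_be: "a * be = be * a"
  by (simp add: R17  sdet_def algebra_simps HS)
lemma L_a_bez: "a * (be * z) = be * (a * z)"
  by (subst mult.assoc[symmetric], subst L_a_be, simp add: ring_distribs mult.assoc)
definition "W_a_ga = (a * a) - (a * (a * Dhi))"
lemma HW_W_a_ga: "W_a_ga * h = h * W_a_ga" "W_a_ga * (h * z) = h * (W_a_ga * z)"
  by (simp_all add: W_a_ga_def algebra_simps HS )
lemma L_a_ga: "a * ga = ga * a + h * W_a_ga"
  by (simp add: R18 W_a_ga_def sdet_def algebra_simps HS)
lemma L_a_gaz: "a * (ga * z) = ga * (a * z) + h * (W_a_ga * z)"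
  by (subst mult.assoc[symmetric], subst L_a_ga, simp add: ring_distribs mult.assoc)
lemma L_d_be: "d * be = be * d"
  by (simp add: R19  sdet_def algebra_simps HS)
lemma L_d_bez: "d * (be * z) = be * (d * z)"
  by (subst mult.assoc[symmetric], subst L_d_be, simp add: ring_distribs mult.assoc)
definition "W_d_ga = - (d * d) + (d * (d * (a * di))) - (d * (d * (be * (di * (ga * di)))))"
lemma HW_W_d_ga: "W_d_ga * h = h * W_d_ga" "W_d_ga * (h * z) = h * (W_d_ga * z)"
  by (simp_all add: W_d_ga_def algebra_simps HS )
lemma L_d_ga: "d * ga = ga * d + h * W_d_ga"
  by (simp add: R20 W_d_ga_def sdet_def algebra_simps HS)
lemma L_d_gaz: "d * (ga * z) = ga * (d * z) + h * (W_d_ga * z)"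
  by (subst mult.assoc[symmetric], subst L_d_ga, simp add: ring_distribs mult.assoc)
lemma L_be_be: "be * be = 0"
  by (simp add: R21  sdet_def algebra_simps HS)
lemma L_be_bez: "be * (be * z) = 0"
  by (subst mult.assoc[symmetric], subst L_be_be, simp add: ring_distribs mult.assoc)
definition "W_ga_ga = (ga * d) - (ga * (d * (a * di))) + (ga * (d * (be * (di * (ga * di)))))"
lemma HW_W_ga_ga: "W_ga_ga * h = - (h * W_ga_ga)" "W_ga_ga * (h * z) = - (h * (W_ga_ga * z))"
  by (simp_all add: W_ga_ga_def algebra_simps HS )
lemma L_ga_ga: "ga * ga = h * W_ga_ga"
  by (simp add: R22 W_ga_ga_def sdet_def algebra_simps HS)
lemma L_ga_gaz: "ga * (ga * z) = h * (W_ga_ga * z)"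
  by (subst mult.assoc[symmetric], subst L_ga_ga, simp add: ring_distribs mult.assoc)
definition "W_be_ga = (be * d) - (be * (d * (a * di))) + (be * (d * (be * (di * (ga * di)))))"
lemma HW_W_be_ga: "W_be_ga * h = - (h * W_be_ga)" "W_be_ga * (h * z) = - (h * (W_be_ga * z))"
  by (simp_all add: W_be_ga_def algebra_simps HS )
lemma L_be_ga: "be * ga = - (ga * be) + h * W_be_ga"
  by (simp add: R23 W_be_ga_def sdet_def algebra_simps HS)
lemma L_be_gaz: "be * (ga * z) = - (ga * (be * z)) + h * (W_be_ga * z)"
  by (subst mult.assoc[symmetric], subst L_be_ga, simp add: ring_distribs mult.assoc)
definition "W_a_d = - (be * d) + (be * (d * (a * di))) - (be * (d * (be * (di * (ga * di)))))"
lemma HW_W_a_d: "W_a_d * h = - (h * W_a_d)" "W_a_d * (h * z) = - (h * (W_a_d * z))"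
  by (simp_all add: W_a_d_def algebra_simps HS )
lemma L_a_d: "a * d = d * a + h * W_a_d"
  by (simp add: R24 W_a_d_def sdet_def algebra_simps HS)
lemma L_a_dz: "a * (d * z) = d * (a * z) + h * (W_a_d * z)"
  by (subst mult.assoc[symmetric], subst L_a_d, simp add: ring_distribs mult.assoc)
definition "W_a_al = (al * be) - (b * a)"
lemma HW_W_a_al: "W_a_al * h = h * W_a_al" "W_a_al * (h * z) = h * (W_a_al * z)"
  by (simp_all add: W_a_al_def algebra_simps HS )
lemma L_a_al: "a * al = al * a + h * W_a_al"
  by (simp add: R25 W_a_al_def sdet_def algebra_simps HS)
lemma L_a_alz: "a * (al * z) = al * (a * z) + h * (W_a_al * z)"
  by (subst mult.assoc[symmetric], subst L_a_al, simp add: ring_distribs mult.assoc)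
definition "W_a_b = - (b * be)"
lemma HW_W_a_b: "W_a_b * h = - (h * W_a_b)" "W_a_b * (h * z) = - (h * (W_a_b * z))"
  by (simp_all add: W_a_b_def algebra_simps HS )
lemma L_a_b: "a * b = b * a + h * W_a_b"
  by (simp add: R26 W_a_b_def sdet_def algebra_simps HS)
lemma L_a_bz: "a * (b * z) = b * (a * z) + h * (W_a_b * z)"
  by (subst mult.assoc[symmetric], subst L_a_b, simp add: ring_distribs mult.assoc)
definition "W_a_c = (al * a) - (c * be) + (de * a)"
lemma HW_W_a_c: "W_a_c * h = - (h * W_a_c)" "W_a_c * (h * z) = - (h * (W_a_c * z))"
  by (simp_all add: W_a_c_def algebra_simps HS )
lemma L_a_c: "a * c = c * a + h * W_a_c"
  by (simp add: R27 W_a_c_def sdet_def algebra_simps HS)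
lemma L_a_cz: "a * (c * z) = c * (a * z) + h * (W_a_c * z)"
  by (subst mult.assoc[symmetric], subst L_a_c, simp add: ring_distribs mult.assoc)
definition "W_a_de = (b * a) + (de * be)"
lemma HW_W_a_de: "W_a_de * h = h * W_a_de" "W_a_de * (h * z) = h * (W_a_de * z)"
  by (simp_all add: W_a_de_def algebra_simps HS )
lemma L_a_de: "a * de = de * a + h * W_a_de"
  by (simp add: R28 W_a_de_def sdet_def algebra_simps HS)
lemma L_a_dez: "a * (de * z) = de * (a * z) + h * (W_a_de * z)"
  by (subst mult.assoc[symmetric], subst L_a_de, simp add: ring_distribs mult.assoc)
definition "W_be_al = (b * be)"
lemma HW_W_be_al: "W_be_al * h = - (h * W_be_al)" "W_be_al * (h * z) = - (h * (W_be_al * z))"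
  by (simp_all add: W_be_al_def algebra_simps HS )
lemma L_be_al: "be * al = - (al * be) + h * W_be_al"
  by (simp add: R29 W_be_al_def sdet_def algebra_simps HS)
lemma L_be_alz: "be * (al * z) = - (al * (be * z)) + h * (W_be_al * z)"
  by (subst mult.assoc[symmetric], subst L_be_al, simp add: ring_distribs mult.assoc)
lemma L_be_b: "be * b = b * be"
  by (simp add: R30  sdet_def algebra_simps HS)
lemma L_be_bz: "be * (b * z) = b * (be * z)"
  by (subst mult.assoc[symmetric], subst L_be_b, simp add: ring_distribs mult.assoc)
definition "W_be_c = (al * be) + (de * be)"
lemma HW_W_be_c: "W_be_c * h = h * W_be_c" "W_be_c * (h * z) = h * (W_be_c * z)"
  by (simp_all add: W_be_c_def algebra_simps HS )
lemma L_be_c: "be * c = c * be + h * W_be_c"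
  by (simp add: R31 W_be_c_def sdet_def algebra_simps HS)
lemma L_be_cz: "be * (c * z) = c * (be * z) + h * (W_be_c * z)"
  by (subst mult.assoc[symmetric], subst L_be_c, simp add: ring_distribs mult.assoc)
definition "W_be_de = - (b * be)"
lemma HW_W_be_de: "W_be_de * h = - (h * W_be_de)" "W_be_de * (h * z) = - (h * (W_be_de * z))"
  by (simp_all add: W_be_de_def algebra_simps HS )
lemma L_be_de: "be * de = - (de * be) + h * W_be_de"
  by (simp add: R32 W_be_de_def sdet_def algebra_simps HS)
lemma L_be_dez: "be * (de * z) = - (de * (be * z)) + h * (W_be_de * z)"
  by (subst mult.assoc[symmetric], subst L_be_de, simp add: ring_distribs mult.assoc)
definition "W_ga_al = (al * a) + (al * d) + (b * ga)"
lemma HW_W_ga_al: "W_ga_al * h = - (h * W_ga_al)" "W_ga_al * (h * z) = - (h * (W_ga_al * z))"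
  by (simp_all add: W_ga_al_def algebra_simps HS )
lemma L_ga_al: "ga * al = - (al * ga) + h * W_ga_al"
  by (simp add: R33 W_ga_al_def sdet_def algebra_simps HS)
lemma L_ga_alz: "ga * (al * z) = - (al * (ga * z)) + h * (W_ga_al * z)"
  by (subst mult.assoc[symmetric], subst L_ga_al, simp add: ring_distribs mult.assoc)
definition "W_ga_b = (b * a) + (b * d)"
lemma HW_W_ga_b: "W_ga_b * h = h * W_ga_b" "W_ga_b * (h * z) = h * (W_ga_b * z)"
  by (simp_all add: W_ga_b_def algebra_simps HS )
lemma L_ga_b: "ga * b = b * ga + h * W_ga_b"
  by (simp add: R34 W_ga_b_def sdet_def algebra_simps HS)
lemma L_ga_bz: "ga * (b * z) = b * (ga * z) + h * (W_ga_b * z)"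
  by (subst mult.assoc[symmetric], subst L_ga_b, simp add: ring_distribs mult.assoc)
definition "W_ga_c = (al * ga) + (c * a) + (c * d) + (de * ga)"
lemma HW_W_ga_c: "W_ga_c * h = h * W_ga_c" "W_ga_c * (h * z) = h * (W_ga_c * z)"
  by (simp_all add: W_ga_c_def algebra_simps HS )
lemma L_ga_c: "ga * c = c * ga + h * W_ga_c"
  by (simp add: R35 W_ga_c_def sdet_def algebra_simps HS)
lemma L_ga_cz: "ga * (c * z) = c * (ga * z) + h * (W_ga_c * z)"
  by (subst mult.assoc[symmetric], subst L_ga_c, simp add: ring_distribs mult.assoc)
definition "W_ga_de = - (b * ga) + (de * a) + (de * d)"
lemma HW_W_ga_de: "W_ga_de * h = - (h * W_ga_de)" "W_ga_de * (h * z) = - (h * (W_ga_de * z))"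
  by (simp_all add: W_ga_de_def algebra_simps HS )
lemma L_ga_de: "ga * de = - (de * ga) + h * W_ga_de"
  by (simp add: R36 W_ga_de_def sdet_def algebra_simps HS)
lemma L_ga_dez: "ga * (de * z) = - (de * (ga * z)) + h * (W_ga_de * z)"
  by (subst mult.assoc[symmetric], subst L_ga_de, simp add: ring_distribs mult.assoc)
definition "W_d_al = - (al * be) - (b * d)"
lemma HW_W_d_al: "W_d_al * h = h * W_d_al" "W_d_al * (h * z) = h * (W_d_al * z)"
  by (simp_all add: W_d_al_def algebra_simps HS )
lemma L_d_al: "d * al = al * d + h * W_d_al"
  by (simp add: R37 W_d_al_def sdet_def algebra_simps HS)
lemma L_d_alz: "d * (al * z) = al * (d * z) + h * (W_d_al * z)"
  by (subst mult.assoc[symmetric], subst L_d_al, simp add: ring_distribs mult.assoc)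
definition "W_d_b = (b * be)"
lemma HW_W_d_b: "W_d_b * h = - (h * W_d_b)" "W_d_b * (h * z) = - (h * (W_d_b * z))"
  by (simp_all add: W_d_b_def algebra_simps HS )
lemma L_d_b: "d * b = b * d + h * W_d_b"
  by (simp add: R38 W_d_b_def sdet_def algebra_simps HS)
lemma L_d_bz: "d * (b * z) = b * (d * z) + h * (W_d_b * z)"
  by (subst mult.assoc[symmetric], subst L_d_b, simp add: ring_distribs mult.assoc)
definition "W_d_c = (al * d) + (c * be) + (de * d)"
lemma HW_W_d_c: "W_d_c * h = - (h * W_d_c)" "W_d_c * (h * z) = - (h * (W_d_c * z))"
  by (simp_all add: W_d_c_def algebra_simps HS )
lemma L_d_c: "d * c = c * d + h * W_d_c"
  by (simp add: R39 W_d_c_def sdet_def algebra_simps HS)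
lemma L_d_cz: "d * (c * z) = c * (d * z) + h * (W_d_c * z)"
  by (subst mult.assoc[symmetric], subst L_d_c, simp add: ring_distribs mult.assoc)
definition "W_d_de = (b * d) - (de * be)"
lemma HW_W_d_de: "W_d_de * h = h * W_d_de" "W_d_de * (h * z) = h * (W_d_de * z)"
  by (simp_all add: W_d_de_def algebra_simps HS )
lemma L_d_de: "d * de = de * d + h * W_d_de"
  by (simp add: R40 W_d_de_def sdet_def algebra_simps HS)
lemma L_d_dez: "d * (de * z) = de * (d * z) + h * (W_d_de * z)"
  by (subst mult.assoc[symmetric], subst L_d_de, simp add: ring_distribs mult.assoc)
definition "W_al_b = (b * b)"
lemma HW_W_al_b: "W_al_b * h = h * W_al_b" "W_al_b * (h * z) = h * (W_al_b * z)"
  by (simp_all add: W_al_b_def algebra_simps HS )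
lemma L_al_b: "al * b = b * al + h * W_al_b"
  by (simp add: R41 W_al_b_def sdet_def algebra_simps HS)
lemma L_al_bz: "al * (b * z) = b * (al * z) + h * (W_al_b * z)"
  by (subst mult.assoc[symmetric], subst L_al_b, simp add: ring_distribs mult.assoc)
definition "W_al_c = (c * b) + (de * al)"
lemma HW_W_al_c: "W_al_c * h = h * W_al_c" "W_al_c * (h * z) = h * (W_al_c * z)"
  by (simp_all add: W_al_c_def algebra_simps HS )
lemma L_al_c: "al * c = c * al + h * W_al_c"
  by (simp add: R42 W_al_c_def sdet_def algebra_simps HS)
lemma L_al_cz: "al * (c * z) = c * (al * z) + h * (W_al_c * z)"
  by (subst mult.assoc[symmetric], subst L_al_c, simp add: ring_distribs mult.assoc)
definition "W_de_b = - (b * b)"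
lemma HW_W_de_b: "W_de_b * h = h * W_de_b" "W_de_b * (h * z) = h * (W_de_b * z)"
  by (simp_all add: W_de_b_def algebra_simps HS )
lemma L_de_b: "de * b = b * de + h * W_de_b"
  by (simp add: R43 W_de_b_def sdet_def algebra_simps HS)
lemma L_de_bz: "de * (b * z) = b * (de * z) + h * (W_de_b * z)"
  by (subst mult.assoc[symmetric], subst L_de_b, simp add: ring_distribs mult.assoc)
definition "W_de_c = (al * de) - (c * b)"
lemma HW_W_de_c: "W_de_c * h = h * W_de_c" "W_de_c * (h * z) = h * (W_de_c * z)"
  by (simp_all add: W_de_c_def algebra_simps HS )
lemma L_de_c: "de * c = c * de + h * W_de_c"
  by (simp add: R44 W_de_c_def sdet_def algebra_simps HS)
lemma L_de_cz: "de * (c * z) = c * (de * z) + h * (W_de_c * z)"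
  by (subst mult.assoc[symmetric], subst L_de_c, simp add: ring_distribs mult.assoc)
definition "W_al_al = (al * b)"
lemma HW_W_al_al: "W_al_al * h = - (h * W_al_al)" "W_al_al * (h * z) = - (h * (W_al_al * z))"
  by (simp_all add: W_al_al_def algebra_simps HS )
lemma L_al_al: "al * al = h * W_al_al"
  by (simp add: R45 W_al_al_def sdet_def algebra_simps HS)
lemma L_al_alz: "al * (al * z) = h * (W_al_al * z)"
  by (subst mult.assoc[symmetric], subst L_al_al, simp add: ring_distribs mult.assoc)
definition "W_al_de = - (al * b) + (de * b)"
lemma HW_W_al_de: "W_al_de * h = - (h * W_al_de)" "W_al_de * (h * z) = - (h * (W_al_de * z))"
  by (simp_all add: W_al_de_def algebra_simps HS )
lemma L_al_de: "al * de = - (de * al) + h * W_al_de"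
  by (simp add: R46 W_al_de_def sdet_def algebra_simps HS)
lemma L_al_dez: "al * (de * z) = - (de * (al * z)) + h * (W_al_de * z)"
  by (subst mult.assoc[symmetric], subst L_al_de, simp add: ring_distribs mult.assoc)
definition "W_de_de = - (de * b)"
lemma HW_W_de_de: "W_de_de * h = - (h * W_de_de)" "W_de_de * (h * z) = - (h * (W_de_de * z))"
  by (simp_all add: W_de_de_def algebra_simps HS )
lemma L_de_de: "de * de = h * W_de_de"
  by (simp add: R47 W_de_de_def sdet_def algebra_simps HS)
lemma L_de_dez: "de * (de * z) = h * (W_de_de * z)"
  by (subst mult.assoc[symmetric], subst L_de_de, simp add: ring_distribs mult.assoc)
definition "W_b_c = (al * b) + (de * b)"
lemma HW_W_b_c: "W_b_c * h = - (h * W_b_c)" "W_b_c * (h * z) = - (h * (W_b_c * z))"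
  by (simp_all add: W_b_c_def algebra_simps HS )
lemma L_b_c: "b * c = c * b + h * W_b_c"
  by (simp add: R48 W_b_c_def sdet_def algebra_simps HS)
lemma L_b_cz: "b * (c * z) = c * (b * z) + h * (W_b_c * z)"
  by (subst mult.assoc[symmetric], subst L_b_c, simp add: ring_distribs mult.assoc)
definition "W_b_ci = - (ci * (W_b_c * ci))"
lemma HW_W_b_ci: "W_b_ci * h = - (h * W_b_ci)" "W_b_ci * (h * z) = - (h * (W_b_ci * z))"
  by (simp_all add: W_b_ci_def algebra_simps HS HW_W_b_c)
lemma L_b_ci: "b * ci = ci * b + h * W_b_ci"
  proof -
  have 1: "c * b = b * c - h * W_b_c" by (simp add: L_b_c)
  have 2: "b * ci = ci * (c * b) * ci" by (rule conjR[OF I_ci_c(1)])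
  have 3: "b * ci = ci * (b * c - h * W_b_c) * ci" using 2 unfolding 1 .
  have 4: "ci * (b * c - h * W_b_c) * ci = ci * b + h * W_b_ci" by (simp add: W_b_ci_def algebra_simps HS)
  show ?thesis by (rule trans[OF 3 4])
qed
lemma L_b_ciz: "b * (ci * z) = ci * (b * z) + h * (W_b_ci * z)"
  by (subst mult.assoc[symmetric], subst L_b_ci, simp add: ring_distribs mult.assoc)
definition "W_de_ci = - (ci * (W_de_c * ci))"
lemma HW_W_de_ci: "W_de_ci * h = h * W_de_ci" "W_de_ci * (h * z) = h * (W_de_ci * z)"
  by (simp_all add: W_de_ci_def algebra_simps HS HW_W_de_c)
lemma L_de_ci: "de * ci = ci * de + h * W_de_ci"
  proof -
  have 1: "c * de = de * c - h * W_de_c" by (simp add: L_de_c)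
  have 2: "de * ci = ci * (c * de) * ci" by (rule conjR[OF I_ci_c(1)])
  have 3: "de * ci = ci * (de * c - h * W_de_c) * ci" using 2 unfolding 1 .
  have 4: "ci * (de * c - h * W_de_c) * ci = ci * de + h * W_de_ci" by (simp add: W_de_ci_def algebra_simps HS)
  show ?thesis by (rule trans[OF 3 4])
qed
lemma L_de_ciz: "de * (ci * z) = ci * (de * z) + h * (W_de_ci * z)"
  by (subst mult.assoc[symmetric], subst L_de_ci, simp add: ring_distribs mult.assoc)
definition "W_al_ci = - (ci * (W_al_c * ci))"
lemma HW_W_al_ci: "W_al_ci * h = h * W_al_ci" "W_al_ci * (h * z) = h * (W_al_ci * z)"
  by (simp_all add: W_al_ci_def algebra_simps HS HW_W_al_c)
lemma L_al_ci: "al * ci = ci * al + h * W_al_ci"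
  proof -
  have 1: "c * al = al * c - h * W_al_c" by (simp add: L_al_c)
  have 2: "al * ci = ci * (c * al) * ci" by (rule conjR[OF I_ci_c(1)])
  have 3: "al * ci = ci * (al * c - h * W_al_c) * ci" using 2 unfolding 1 .
  have 4: "ci * (al * c - h * W_al_c) * ci = ci * al + h * W_al_ci" by (simp add: W_al_ci_def algebra_simps HS)
  show ?thesis by (rule trans[OF 3 4])
qed
lemma L_al_ciz: "al * (ci * z) = ci * (al * z) + h * (W_al_ci * z)"
  by (subst mult.assoc[symmetric], subst L_al_ci, simp add: ring_distribs mult.assoc)
definition "W_ga_ci = - (ci * (W_ga_c * ci))"
lemma HW_W_ga_ci: "W_ga_ci * h = h * W_ga_ci" "W_ga_ci * (h * z) = h * (W_ga_ci * z)"
  by (simp_all add: W_ga_ci_def algebra_simps HS HW_W_ga_c)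
lemma L_ga_ci: "ga * ci = ci * ga + h * W_ga_ci"
  proof -
  have 1: "c * ga = ga * c - h * W_ga_c" by (simp add: L_ga_c)
  have 2: "ga * ci = ci * (c * ga) * ci" by (rule conjR[OF I_ci_c(1)])
  have 3: "ga * ci = ci * (ga * c - h * W_ga_c) * ci" using 2 unfolding 1 .
  have 4: "ci * (ga * c - h * W_ga_c) * ci = ci * ga + h * W_ga_ci" by (simp add: W_ga_ci_def algebra_simps HS)
  show ?thesis by (rule trans[OF 3 4])
qed
lemma L_ga_ciz: "ga * (ci * z) = ci * (ga * z) + h * (W_ga_ci * z)"
  by (subst mult.assoc[symmetric], subst L_ga_ci, simp add: ring_distribs mult.assoc)
definition "W_be_ci = - (ci * (W_be_c * ci))"
lemma HW_W_be_ci: "W_be_ci * h = h * W_be_ci" "W_be_ci * (h * z) = h * (W_be_ci * z)"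
  by (simp_all add: W_be_ci_def algebra_simps HS HW_W_be_c)
lemma L_be_ci: "be * ci = ci * be + h * W_be_ci"
  proof -
  have 1: "c * be = be * c - h * W_be_c" by (simp add: L_be_c)
  have 2: "be * ci = ci * (c * be) * ci" by (rule conjR[OF I_ci_c(1)])
  have 3: "be * ci = ci * (be * c - h * W_be_c) * ci" using 2 unfolding 1 .
  have 4: "ci * (be * c - h * W_be_c) * ci = ci * be + h * W_be_ci" by (simp add: W_be_ci_def algebra_simps HS)
  show ?thesis by (rule trans[OF 3 4])
qed
lemma L_be_ciz: "be * (ci * z) = ci * (be * z) + h * (W_be_ci * z)"
  by (subst mult.assoc[symmetric], subst L_be_ci, simp add: ring_distribs mult.assoc)
definition "W_d_ci = - (ci * (W_d_c * ci))"
lemma HW_W_d_ci: "W_d_ci * h = - (h * W_d_ci)" "W_d_ci * (h * z) = - (h * (W_d_ci * z))"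
  by (simp_all add: W_d_ci_def algebra_simps HS HW_W_d_c)
lemma L_d_ci: "d * ci = ci * d + h * W_d_ci"
  proof -
  have 1: "c * d = d * c - h * W_d_c" by (simp add: L_d_c)
  have 2: "d * ci = ci * (c * d) * ci" by (rule conjR[OF I_ci_c(1)])
  have 3: "d * ci = ci * (d * c - h * W_d_c) * ci" using 2 unfolding 1 .
  have 4: "ci * (d * c - h * W_d_c) * ci = ci * d + h * W_d_ci" by (simp add: W_d_ci_def algebra_simps HS)
  show ?thesis by (rule trans[OF 3 4])
qed
lemma L_d_ciz: "d * (ci * z) = ci * (d * z) + h * (W_d_ci * z)"
  by (subst mult.assoc[symmetric], subst L_d_ci, simp add: ring_distribs mult.assoc)
definition "W_a_ci = - (ci * (W_a_c * ci))"
lemma HW_W_a_ci: "W_a_ci * h = - (h * W_a_ci)" "W_a_ci * (h * z) = - (h * (W_a_ci * z))"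
  by (simp_all add: W_a_ci_def algebra_simps HS HW_W_a_c)
lemma L_a_ci: "a * ci = ci * a + h * W_a_ci"
  proof -
  have 1: "c * a = a * c - h * W_a_c" by (simp add: L_a_c)
  have 2: "a * ci = ci * (c * a) * ci" by (rule conjR[OF I_ci_c(1)])
  have 3: "a * ci = ci * (a * c - h * W_a_c) * ci" using 2 unfolding 1 .
  have 4: "ci * (a * c - h * W_a_c) * ci = ci * a + h * W_a_ci" by (simp add: W_a_ci_def algebra_simps HS)
  show ?thesis by (rule trans[OF 3 4])
qed
lemma L_a_ciz: "a * (ci * z) = ci * (a * z) + h * (W_a_ci * z)"
  by (subst mult.assoc[symmetric], subst L_a_ci, simp add: ring_distribs mult.assoc)
definition "W_di_c = - (di * (W_d_c * di))"
lemma HW_W_di_c: "W_di_c * h = - (h * W_di_c)" "W_di_c * (h * z) = - (h * (W_di_c * z))"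
  by (simp_all add: W_di_c_def algebra_simps HS HW_W_d_c)
lemma L_di_c: "di * c = c * di + h * W_di_c"
  proof -
  have 1: "c * d = d * c - h * W_d_c" by (simp add: L_d_c)
  have 2: "di * c = di * (c * d) * di" by (rule conjL[OF I_d_di(1)])
  have 3: "di * c = di * (d * c - h * W_d_c) * di" using 2 unfolding 1 .
  have 4: "di * (d * c - h * W_d_c) * di = c * di + h * W_di_c" by (simp add: W_di_c_def algebra_simps HS)
  show ?thesis by (rule trans[OF 3 4])
qed
lemma L_di_cz: "di * (c * z) = c * (di * z) + h * (W_di_c * z)"
  by (subst mult.assoc[symmetric], subst L_di_c, simp add: ring_distribs mult.assoc)
definition "W_di_b = - (di * (W_d_b * di))"
lemma HW_W_di_b: "W_di_b * h = - (h * W_di_b)" "W_di_b * (h * z) = - (h * (W_di_b * z))"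
  by (simp_all add: W_di_b_def algebra_simps HS HW_W_d_b)
lemma L_di_b: "di * b = b * di + h * W_di_b"
  proof -
  have 1: "b * d = d * b - h * W_d_b" by (simp add: L_d_b)
  have 2: "di * b = di * (b * d) * di" by (rule conjL[OF I_d_di(1)])
  have 3: "di * b = di * (d * b - h * W_d_b) * di" using 2 unfolding 1 .
  have 4: "di * (d * b - h * W_d_b) * di = b * di + h * W_di_b" by (simp add: W_di_b_def algebra_simps HS)
  show ?thesis by (rule trans[OF 3 4])
qed
lemma L_di_bz: "di * (b * z) = b * (di * z) + h * (W_di_b * z)"
  by (subst mult.assoc[symmetric], subst L_di_b, simp add: ring_distribs mult.assoc)
definition "W_di_de = - (di * (W_d_de * di))"
lemma HW_W_di_de: "W_di_de * h = h * W_di_de" "W_di_de * (h * z) = h * (W_di_de * z)"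
  by (simp_all add: W_di_de_def algebra_simps HS HW_W_d_de)
lemma L_di_de: "di * de = de * di + h * W_di_de"
  proof -
  have 1: "de * d = d * de - h * W_d_de" by (simp add: L_d_de)
  have 2: "di * de = di * (de * d) * di" by (rule conjL[OF I_d_di(1)])
  have 3: "di * de = di * (d * de - h * W_d_de) * di" using 2 unfolding 1 .
  have 4: "di * (d * de - h * W_d_de) * di = de * di + h * W_di_de" by (simp add: W_di_de_def algebra_simps HS)
  show ?thesis by (rule trans[OF 3 4])
qed
lemma L_di_dez: "di * (de * z) = de * (di * z) + h * (W_di_de * z)"
  by (subst mult.assoc[symmetric], subst L_di_de, simp add: ring_distribs mult.assoc)
definition "W_di_al = - (di * (W_d_al * di))"
lemma HW_W_di_al: "W_di_al * h = h * W_di_al" "W_di_al * (h * z) = h * (W_di_al * z)"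
  by (simp_all add: W_di_al_def algebra_simps HS HW_W_d_al)
lemma L_di_al: "di * al = al * di + h * W_di_al"
  proof -
  have 1: "al * d = d * al - h * W_d_al" by (simp add: L_d_al)
  have 2: "di * al = di * (al * d) * di" by (rule conjL[OF I_d_di(1)])
  have 3: "di * al = di * (d * al - h * W_d_al) * di" using 2 unfolding 1 .
  have 4: "di * (d * al - h * W_d_al) * di = al * di + h * W_di_al" by (simp add: W_di_al_def algebra_simps HS)
  show ?thesis by (rule trans[OF 3 4])
qed
lemma L_di_alz: "di * (al * z) = al * (di * z) + h * (W_di_al * z)"
  by (subst mult.assoc[symmetric], subst L_di_al, simp add: ring_distribs mult.assoc)
definition "W_di_ga = - (di * (W_d_ga * di))"
lemma HW_W_di_ga: "W_di_ga * h = h * W_di_ga" "W_di_ga * (h * z) = h * (W_di_ga * z)"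
  by (simp_all add: W_di_ga_def algebra_simps HS HW_W_d_ga)
lemma L_di_ga: "di * ga = ga * di + h * W_di_ga"
  proof -
  have 1: "ga * d = d * ga - h * W_d_ga" by (simp add: L_d_ga)
  have 2: "di * ga = di * (ga * d) * di" by (rule conjL[OF I_d_di(1)])
  have 3: "di * ga = di * (d * ga - h * W_d_ga) * di" using 2 unfolding 1 .
  have 4: "di * (d * ga - h * W_d_ga) * di = ga * di + h * W_di_ga" by (simp add: W_di_ga_def algebra_simps HS)
  show ?thesis by (rule trans[OF 3 4])
qed
lemma L_di_gaz: "di * (ga * z) = ga * (di * z) + h * (W_di_ga * z)"
  by (subst mult.assoc[symmetric], subst L_di_ga, simp add: ring_distribs mult.assoc)
lemma L_di_be: "di * be = be * di"
  proof -
  have 1: "be * d = d * be" by (simp add: L_d_be)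
  have 2: "di * be = di * (be * d) * di" by (rule conjL[OF I_d_di(1)])
  have 3: "di * be = di * (d * be) * di" using 2 unfolding 1 .
  have 4: "di * (d * be) * di = be * di" by (simp add: algebra_simps HS)
  show ?thesis by (rule trans[OF 3 4])
qed
lemma L_di_bez: "di * (be * z) = be * (di * z)"
  by (subst mult.assoc[symmetric], subst L_di_be, simp add: ring_distribs mult.assoc)
definition "W_a_di = - (di * (W_a_d * di))"
lemma HW_W_a_di: "W_a_di * h = - (h * W_a_di)" "W_a_di * (h * z) = - (h * (W_a_di * z))"
  by (simp_all add: W_a_di_def algebra_simps HS HW_W_a_d)
lemma L_a_di: "a * di = di * a + h * W_a_di"
  proof -
  have 1: "d * a = a * d - h * W_a_d" by (simp add: L_a_d)
  have 2: "a * di = di * (d * a) * di" by (rule conjR[OF I_di_d(1)])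
  have 3: "a * di = di * (a * d - h * W_a_d) * di" using 2 unfolding 1 .
  have 4: "di * (a * d - h * W_a_d) * di = di * a + h * W_a_di" by (simp add: W_a_di_def algebra_simps HS)
  show ?thesis by (rule trans[OF 3 4])
qed
lemma L_a_diz: "a * (di * z) = di * (a * z) + h * (W_a_di * z)"
  by (subst mult.assoc[symmetric], subst L_a_di, simp add: ring_distribs mult.assoc)
definition "W_di_ci = - (di * (W_d_ci * di))"
lemma HW_W_di_ci: "W_di_ci * h = - (h * W_di_ci)" "W_di_ci * (h * z) = - (h * (W_di_ci * z))"
  by (simp_all add: W_di_ci_def algebra_simps HS HW_W_d_ci)
lemma L_di_ci: "di * ci = ci * di + h * W_di_ci"
  proof -
  have 1: "ci * d = d * ci - h * W_d_ci" by (simp add: L_d_ci)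
  have 2: "di * ci = di * (ci * d) * di" by (rule conjL[OF I_d_di(1)])
  have 3: "di * ci = di * (d * ci - h * W_d_ci) * di" using 2 unfolding 1 .
  have 4: "di * (d * ci - h * W_d_ci) * di = ci * di + h * W_di_ci" by (simp add: W_di_ci_def algebra_simps HS)
  show ?thesis by (rule trans[OF 3 4])
qed
lemma L_di_ciz: "di * (ci * z) = ci * (di * z) + h * (W_di_ci * z)"
  by (subst mult.assoc[symmetric], subst L_di_ci, simp add: ring_distribs mult.assoc)
definition "W_ai_c = - (ai * (W_a_c * ai))"
lemma HW_W_ai_c: "W_ai_c * h = - (h * W_ai_c)" "W_ai_c * (h * z) = - (h * (W_ai_c * z))"
  by (simp_all add: W_ai_c_def algebra_simps HS HW_W_a_c)
lemma L_ai_c: "ai * c = c * ai + h * W_ai_c"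
  proof -
  have 1: "c * a = a * c - h * W_a_c" by (simp add: L_a_c)
  have 2: "ai * c = ai * (c * a) * ai" by (rule conjL[OF I_a_ai(1)])
  have 3: "ai * c = ai * (a * c - h * W_a_c) * ai" using 2 unfolding 1 .
  have 4: "ai * (a * c - h * W_a_c) * ai = c * ai + h * W_ai_c" by (simp add: W_ai_c_def algebra_simps HS)
  show ?thesis by (rule trans[OF 3 4])
qed
lemma L_ai_cz: "ai * (c * z) = c * (ai * z) + h * (W_ai_c * z)"
  by (subst mult.assoc[symmetric], subst L_ai_c, simp add: ring_distribs mult.assoc)
definition "W_ai_b = - (ai * (W_a_b * ai))"
lemma HW_W_ai_b: "W_ai_b * h = - (h * W_ai_b)" "W_ai_b * (h * z) = - (h * (W_ai_b * z))"
  by (simp_all add: W_ai_b_def algebra_simps HS HW_W_a_b)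
lemma L_ai_b: "ai * b = b * ai + h * W_ai_b"
  proof -
  have 1: "b * a = a * b - h * W_a_b" by (simp add: L_a_b)
  have 2: "ai * b = ai * (b * a) * ai" by (rule conjL[OF I_a_ai(1)])
  have 3: "ai * b = ai * (a * b - h * W_a_b) * ai" using 2 unfolding 1 .
  have 4: "ai * (a * b - h * W_a_b) * ai = b * ai + h * W_ai_b" by (simp add: W_ai_b_def algebra_simps HS)
  show ?thesis by (rule trans[OF 3 4])
qed
lemma L_ai_bz: "ai * (b * z) = b * (ai * z) + h * (W_ai_b * z)"
  by (subst mult.assoc[symmetric], subst L_ai_b, simp add: ring_distribs mult.assoc)
definition "W_ai_de = - (ai * (W_a_de * ai))"
lemma HW_W_ai_de: "W_ai_de * h = h * W_ai_de" "W_ai_de * (h * z) = h * (W_ai_de * z)"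
  by (simp_all add: W_ai_de_def algebra_simps HS HW_W_a_de)
lemma L_ai_de: "ai * de = de * ai + h * W_ai_de"
  proof -
  have 1: "de * a = a * de - h * W_a_de" by (simp add: L_a_de)
  have 2: "ai * de = ai * (de * a) * ai" by (rule conjL[OF I_a_ai(1)])
  have 3: "ai * de = ai * (a * de - h * W_a_de) * ai" using 2 unfolding 1 .
  have 4: "ai * (a * de - h * W_a_de) * ai = de * ai + h * W_ai_de" by (simp add: W_ai_de_def algebra_simps HS)
  show ?thesis by (rule trans[OF 3 4])
qed
lemma L_ai_dez: "ai * (de * z) = de * (ai * z) + h * (W_ai_de * z)"
  by (subst mult.assoc[symmetric], subst L_ai_de, simp add: ring_distribs mult.assoc)
definition "W_ai_al = - (ai * (W_a_al * ai))"
lemma HW_W_ai_al: "W_ai_al * h = h * W_ai_al" "W_ai_al * (h * z) = h * (W_ai_al * z)"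
  by (simp_all add: W_ai_al_def algebra_simps HS HW_W_a_al)
lemma L_ai_al: "ai * al = al * ai + h * W_ai_al"
  proof -
  have 1: "al * a = a * al - h * W_a_al" by (simp add: L_a_al)
  have 2: "ai * al = ai * (al * a) * ai" by (rule conjL[OF I_a_ai(1)])
  have 3: "ai * al = ai * (a * al - h * W_a_al) * ai" using 2 unfolding 1 .
  have 4: "ai * (a * al - h * W_a_al) * ai = al * ai + h * W_ai_al" by (simp add: W_ai_al_def algebra_simps HS)
  show ?thesis by (rule trans[OF 3 4])
qed
lemma L_ai_alz: "ai * (al * z) = al * (ai * z) + h * (W_ai_al * z)"
  by (subst mult.assoc[symmetric], subst L_ai_al, simp add: ring_distribs mult.assoc)
definition "W_ai_ga = - (ai * (W_a_ga * ai))"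
lemma HW_W_ai_ga: "W_ai_ga * h = h * W_ai_ga" "W_ai_ga * (h * z) = h * (W_ai_ga * z)"
  by (simp_all add: W_ai_ga_def algebra_simps HS HW_W_a_ga)
lemma L_ai_ga: "ai * ga = ga * ai + h * W_ai_ga"
  proof -
  have 1: "ga * a = a * ga - h * W_a_ga" by (simp add: L_a_ga)
  have 2: "ai * ga = ai * (ga * a) * ai" by (rule conjL[OF I_a_ai(1)])
  have 3: "ai * ga = ai * (a * ga - h * W_a_ga) * ai" using 2 unfolding 1 .
  have 4: "ai * (a * ga - h * W_a_ga) * ai = ga * ai + h * W_ai_ga" by (simp add: W_ai_ga_def algebra_simps HS)
  show ?thesis by (rule trans[OF 3 4])
qed
lemma L_ai_gaz: "ai * (ga * z) = ga * (ai * z) + h * (W_ai_ga * z)"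
  by (subst mult.assoc[symmetric], subst L_ai_ga, simp add: ring_distribs mult.assoc)
lemma L_ai_be: "ai * be = be * ai"
  proof -
  have 1: "be * a = a * be" by (simp add: L_a_be)
  have 2: "ai * be = ai * (be * a) * ai" by (rule conjL[OF I_a_ai(1)])
  have 3: "ai * be = ai * (a * be) * ai" using 2 unfolding 1 .
  have 4: "ai * (a * be) * ai = be * ai" by (simp add: algebra_simps HS)
  show ?thesis by (rule trans[OF 3 4])
qed
lemma L_ai_bez: "ai * (be * z) = be * (ai * z)"
  by (subst mult.assoc[symmetric], subst L_ai_be, simp add: ring_distribs mult.assoc)
definition "W_ai_d = - (ai * (W_a_d * ai))"
lemma HW_W_ai_d: "W_ai_d * h = - (h * W_ai_d)" "W_ai_d * (h * z) = - (h * (W_ai_d * z))"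
  by (simp_all add: W_ai_d_def algebra_simps HS HW_W_a_d)
lemma L_ai_d: "ai * d = d * ai + h * W_ai_d"
  proof -
  have 1: "d * a = a * d - h * W_a_d" by (simp add: L_a_d)
  have 2: "ai * d = ai * (d * a) * ai" by (rule conjL[OF I_a_ai(1)])
  have 3: "ai * d = ai * (a * d - h * W_a_d) * ai" using 2 unfolding 1 .
  have 4: "ai * (a * d - h * W_a_d) * ai = d * ai + h * W_ai_d" by (simp add: W_ai_d_def algebra_simps HS)
  show ?thesis by (rule trans[OF 3 4])
qed
lemma L_ai_dz: "ai * (d * z) = d * (ai * z) + h * (W_ai_d * z)"
  by (subst mult.assoc[symmetric], subst L_ai_d, simp add: ring_distribs mult.assoc)
definition "W_ai_ci = - (ai * (W_a_ci * ai))"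
lemma HW_W_ai_ci: "W_ai_ci * h = - (h * W_ai_ci)" "W_ai_ci * (h * z) = - (h * (W_ai_ci * z))"
  by (simp_all add: W_ai_ci_def algebra_simps HS HW_W_a_ci)
lemma L_ai_ci: "ai * ci = ci * ai + h * W_ai_ci"
  proof -
  have 1: "ci * a = a * ci - h * W_a_ci" by (simp add: L_a_ci)
  have 2: "ai * ci = ai * (ci * a) * ai" by (rule conjL[OF I_a_ai(1)])
  have 3: "ai * ci = ai * (a * ci - h * W_a_ci) * ai" using 2 unfolding 1 .
  have 4: "ai * (a * ci - h * W_a_ci) * ai = ci * ai + h * W_ai_ci" by (simp add: W_ai_ci_def algebra_simps HS)
  show ?thesis by (rule trans[OF 3 4])
qed
lemma L_ai_ciz: "ai * (ci * z) = ci * (ai * z) + h * (W_ai_ci * z)"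
  by (subst mult.assoc[symmetric], subst L_ai_ci, simp add: ring_distribs mult.assoc)
definition "W_ai_di = - (ai * (W_a_di * ai))"
lemma HW_W_ai_di: "W_ai_di * h = - (h * W_ai_di)" "W_ai_di * (h * z) = - (h * (W_ai_di * z))"
  by (simp_all add: W_ai_di_def algebra_simps HS HW_W_a_di)
lemma L_ai_di: "ai * di = di * ai + h * W_ai_di"
  proof -
  have 1: "di * a = a * di - h * W_a_di" by (simp add: L_a_di)
  have 2: "ai * di = ai * (di * a) * ai" by (rule conjL[OF I_a_ai(1)])
  have 3: "ai * di = ai * (a * di - h * W_a_di) * ai" using 2 unfolding 1 .
  have 4: "ai * (a * di - h * W_a_di) * ai = di * ai + h * W_ai_di" by (simp add: W_ai_di_def algebra_simps HS)
  show ?thesis by (rule trans[OF 3 4])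
qed
lemma L_ai_diz: "ai * (di * z) = di * (ai * z) + h * (W_ai_di * z)"
  by (subst mult.assoc[symmetric], subst L_ai_di, simp add: ring_distribs mult.assoc)
lemmas L0 = L_a_be L_a_bez L_a_ga L_a_gaz L_d_be L_d_bez L_d_ga L_d_gaz L_be_be L_be_bez L_ga_ga L_ga_gaz L_be_ga L_be_gaz L_a_d L_a_dz L_a_al L_a_alz L_a_b L_a_bz L_a_c L_a_cz L_a_de L_a_dez L_be_al L_be_alz L_be_b L_be_bz L_be_c L_be_cz L_be_de L_be_dez L_ga_al L_ga_alz L_ga_b L_ga_bz L_ga_c L_ga_cz L_ga_de L_ga_dez L_d_al L_d_alz L_d_b L_d_bz L_d_c L_d_cz L_d_de L_d_dez L_al_b L_al_bz L_al_c L_al_cz L_de_b L_de_bz L_de_c L_de_cz L_al_al L_al_alz L_al_de L_al_dez L_de_de L_de_dez L_b_c L_b_cz L_b_ci L_b_ciz L_de_ci L_de_ciz L_al_ci L_al_ciz L_ga_ci L_ga_ciz L_be_ci L_be_ciz L_d_ci L_d_ciz L_a_ci L_a_ciz L_di_c L_di_cz L_di_b L_di_bz L_di_de L_di_dez L_di_al L_di_alz L_di_ga L_di_gaz L_di_be L_di_bez L_a_di L_a_diz L_di_ci L_di_ciz L_ai_c L_ai_cz L_ai_b L_ai_bz L_ai_de L_ai_dez L_ai_al L_ai_alz L_ai_ga L_ai_gaz L_ai_be L_ai_bez L_ai_d L_ai_dz L_ai_ci L_ai_ciz L_ai_di L_ai_diz HW_W_a_ga HW_W_d_ga HW_W_ga_ga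 HW_W_be_ga HW_W_a_d HW_W_a_al HW_W_a_b HW_W_a_c HW_W_a_de HW_W_be_al HW_W_be_c HW_W_be_de HW_W_ga_al HW_W_ga_b HW_W_ga_c HW_W_ga_de HW_W_d_al HW_W_d_b HW_W_d_c HW_W_d_de HW_W_al_b HW_W_al_c HW_W_de_b HW_W_de_c HW_W_al_al HW_W_al_de HW_W_de_de HW_W_b_c HW_W_b_ci HW_W_de_ci HW_W_al_ci HW_W_ga_ci HW_W_be_ci HW_W_d_ci HW_W_a_ci HW_W_di_c HW_W_di_b HW_W_di_de HW_W_di_al HW_W_di_ga HW_W_a_di HW_W_di_ci HW_W_ai_c HW_W_ai_b HW_W_ai_de HW_W_ai_al HW_W_ai_ga HW_W_ai_d HW_W_ai_ci HW_W_ai_di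
lemma hDhE: "h * (sdet a be ga di * (d * ai + be * (ga * (ai * ai)))) = h" by (simp add: sdet_def algebra_simps HS L0)
lemma hDhi: "h * Dhi = h * (d * ai + be * (ga * (ai * ai)))"
proof -
  have "h * (d * ai + be * (ga * (ai * ai))) = h * ((Dhi * sdet a be ga di) * (d * ai + be * (ga * (ai * ai))))" by (simp only: R7 mult_1_left)
  also have "\<dots> = (Dhi * h) * (sdet a be ga di * (d * ai + be * (ga * (ai * ai))))" by (simp only: H_Dhi mult.assoc)
  also have "\<dots> = Dhi * (h * (sdet a be ga di * (d * ai + be * (ga * (ai * ai)))))" by (simp only: mult.assoc)
  also have "\<dots> = h * Dhi" by (simp only: hDhE H_Dhi)
  finally show ?thesis by simp
qed
definition "V_a_ga = a * (a * (1 - (d * ai + be * (ga * (ai * ai)))))"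
lemma M_a_ga: "a * ga = ga * a + h * V_a_ga"
proof -
  have k: "h * (a * (a * Dhi)) = a * (a * (h * Dhi))" by (simp add: HS)
  have k2: "h * W_a_ga = h * V_a_ga" unfolding W_a_ga_def V_a_ga_def by (simp add: algebra_simps HS k hDhi)
  show ?thesis using L_a_ga k2 by simp
qed
lemma M_a_gaz: "a * (ga * z) = ga * (a * z) + h * (V_a_ga * z)"
  by (subst mult.assoc[symmetric], subst M_a_ga, simp add: ring_distribs mult.assoc)
definition "V_ai_ga = - (ai * (V_a_ga * ai))"
lemma M_ai_ga: "ai * ga = ga * ai + h * V_ai_ga"
proof -
  have 1: "ga * a = a * ga - h * V_a_ga" by (simp add: M_a_ga)
  have 2: "ai * ga = ai * (ga * a) * ai" by (rule conjL[OF I_a_ai(1)])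
  have 3: "ai * ga = ai * (a * ga - h * V_a_ga) * ai" using 2 unfolding 1 .
  have 4: "ai * (a * ga - h * V_a_ga) * ai = ga * ai + h * V_ai_ga" by (simp add: V_ai_ga_def algebra_simps HS)
  show ?thesis by (rule trans[OF 3 4])
qed
lemma M_ai_gaz: "ai * (ga * z) = ga * (ai * z) + h * (V_ai_ga * z)"
  by (subst mult.assoc[symmetric], subst M_ai_ga, simp add: ring_distribs mult.assoc)
lemma HW_V_a_ga: "V_a_ga * h = h * V_a_ga" "V_a_ga * (h * z) = h * (V_a_ga * z)"
  by (simp_all add: V_a_ga_def algebra_simps HS)
lemma HW_V_ai_ga: "V_ai_ga * h = h * V_ai_ga" "V_ai_ga * (h * z) = h * (V_ai_ga * z)"
  by (simp_all add: V_ai_ga_def algebra_simps HS HW_V_a_ga)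
lemmas LF = L_a_be L_a_bez L_d_be L_d_bez L_d_ga L_d_gaz L_be_be L_be_bez L_ga_ga L_ga_gaz L_be_ga L_be_gaz L_a_d L_a_dz L_a_al L_a_alz L_a_b L_a_bz L_a_c L_a_cz L_a_de L_a_dez L_be_al L_be_alz L_be_b L_be_bz L_be_c L_be_cz L_be_de L_be_dez L_ga_al L_ga_alz L_ga_b L_ga_bz L_ga_c L_ga_cz L_ga_de L_ga_dez L_d_al L_d_alz L_d_b L_d_bz L_d_c L_d_cz L_d_de L_d_dez L_al_b L_al_bz L_al_c L_al_cz L_de_b L_de_bz L_de_c L_de_cz L_al_al L_al_alz L_al_de L_al_dez L_de_de L_de_dez L_b_c L_b_cz L_b_ci L_b_ciz L_de_ci L_de_ciz L_al_ci L_al_ciz L_ga_ci L_ga_ciz L_be_ci L_be_ciz L_d_ci L_d_ciz L_a_ci L_a_ciz L_di_c L_di_cz L_di_b L_di_bz L_di_de L_di_dez L_di_al L_di_alz L_di_ga L_di_gaz L_di_be L_di_bez L_a_di L_a_diz L_di_ci L_di_ciz L_ai_c L_ai_cz L_ai_b L_ai_bz L_ai_de L_ai_dez L_ai_al L_ai_alz L_ai_be L_ai_bez L_ai_d L_ai_dz L_ai_ci L_ai_ciz L_ai_di L_ai_diz M_a_ga M_a_gaz M_ai_ga M_ai_gaz HW_V_a_ga HW_V_ai_ga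
lemmas WD = W_a_ga_def W_d_ga_def W_ga_ga_def W_be_ga_def W_a_d_def W_a_al_def W_a_b_def W_a_c_def W_a_de_def W_be_al_def W_be_c_def W_be_de_def W_ga_al_def W_ga_b_def W_ga_c_def W_ga_de_def W_d_al_def W_d_b_def W_d_c_def W_d_de_def W_al_b_def W_al_c_def W_de_b_def W_de_c_def W_al_al_def W_al_de_def W_de_de_def W_b_c_def W_b_ci_def W_de_ci_def W_al_ci_def W_ga_ci_def W_be_ci_def W_d_ci_def W_a_ci_def W_di_c_def W_di_b_def W_di_de_def W_di_al_def W_di_ga_def W_a_di_def W_di_ci_def W_ai_c_def W_ai_b_def W_ai_de_def W_ai_al_def W_ai_ga_def W_ai_d_def W_ai_ci_def W_ai_di_def V_a_ga_def V_ai_ga_def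
lemma D_a: "sdet a be ga di * a = a * sdet a be ga di"
  by (simp add: sdet_def algebra_simps HS LF; (unfold WD)?; simp add: algebra_simps HS LF)
lemma E_a: "sdet_hat b al de ci * a = a * sdet_hat b al de ci"
  by (simp add: sdet_hat_def algebra_simps HS LF; (unfold WD)?; simp add: algebra_simps HS LF)
lemma D_be: "sdet a be ga di * be = be * sdet a be ga di"
  by (simp add: sdet_def algebra_simps HS LF; (unfold WD)?; simp add: algebra_simps HS LF)
lemma E_be: "sdet_hat b al de ci * be = be * sdet_hat b al de ci"
  by (simp add: sdet_hat_def algebra_simps HS LF; (unfold WD)?; simp add: algebra_simps HS LF)
lemma D_ga: "sdet a be ga di * ga = ga * sdet a be ga di"
  by (simp add: sdet_def algebra_simps HS LF; (unfold WD)?; simp add: algebra_simps HS LF)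
lemma E_ga: "sdet_hat b al de ci * ga = ga * sdet_hat b al de ci"
  by (simp add: sdet_hat_def algebra_simps HS LF; (unfold WD)?; simp add: algebra_simps HS LF)
lemma D_d: "sdet a be ga di * d = d * sdet a be ga di"
  by (simp add: sdet_def algebra_simps HS LF; (unfold WD)?; simp add: algebra_simps HS LF)
lemma E_d: "sdet_hat b al de ci * d = d * sdet_hat b al de ci"
  by (simp add: sdet_hat_def algebra_simps HS LF; (unfold WD)?; simp add: algebra_simps HS LF)
lemma D_al: "sdet a be ga di * al = al * sdet a be ga di"
  by (simp add: sdet_def algebra_simps HS LF; (unfold WD)?; simp add: algebra_simps HS LF)
lemma E_al: "sdet_hat b al de ci * al = al * sdet_hat b al de ci"
  by (simp add: sdet_hat_def algebra_simps HS LF; (unfold WD)?; simp add: algebra_simps HS LF)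
lemma D_b: "sdet a be ga di * b = b * sdet a be ga di"
  by (simp add: sdet_def algebra_simps HS LF; (unfold WD)?; simp add: algebra_simps HS LF)
lemma E_b: "sdet_hat b al de ci * b = b * sdet_hat b al de ci"
  by (simp add: sdet_hat_def algebra_simps HS LF; (unfold WD)?; simp add: algebra_simps HS LF)
lemma D_c: "sdet a be ga di * c = c * sdet a be ga di"
  by (simp add: sdet_def algebra_simps HS LF; (unfold WD)?; simp add: algebra_simps HS LF)
lemma E_c: "sdet_hat b al de ci * c = c * sdet_hat b al de ci"
  by (simp add: sdet_hat_def algebra_simps HS LF; (unfold WD)?; simp add: algebra_simps HS LF)
lemma D_de: "sdet a be ga di * de = de * sdet a be ga di"
  by (simp add: sdet_def algebra_simps HS LF; (unfold WD)?; simp add: algebra_simps HS LF)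
lemma E_de: "sdet_hat b al de ci * de = de * sdet_hat b al de ci"
  by (simp add: sdet_hat_def algebra_simps HS LF; (unfold WD)?; simp add: algebra_simps HS LF)
end

theorem mainTheorem5:
  fixes h a d be ga al b c de ai di ci Dhi :: "'r::real_algebra_1"
  assumes "Gamma_rels h a d be ga al b c de ai di ci Dhi"
  shows "\<forall>x \<in> {a, be, ga, d, al, b, c, de}.
           sdet_hat b al de ci * x = x * sdet_hat b al de ci \<and>
           sdet a be ga di * x = x * sdet a be ga di"
proof -
  interpret GR h a d be ga al b c de ai di ci Dhi by (rule GR.intro) (rule assms)
  show ?thesis using D_a E_a D_be E_be D_ga E_ga D_d E_d D_al E_al D_b E_b D_c E_c D_de E_de by auto
qed

end
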